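(* We have $[w]_{A_\infty}'\leq c_d[w]_{A_\infty}$, where $c_d$ is a constant such that the logarithmic maximal function $M_0 f:=\sup_{Q}\exp\big(\frac{1}{|Q|}\int_Q\log|f|\big)\chi_Q$ satisfies $\|M_0f\|_{L^p}\leq c_{d}^{1/p}\|f\|_{L^p}$ for all $p\in(0,\infty)$.
   Context: Weights on $\mathbb{R}^d$, suprema over all cubes $Q$. $[w]_{A_\infty}:=\sup_Q\big(\frac{1}{|Q|}\int_Q w\big)\exp\big(\frac{1}{|Q|}\int_Q \log w^{-1}\big)$; $[w]_{A_\infty}':=\sup_Q\frac{1}{w(Q)}\int_Q M(w\chi_Q)$, $M$ the Hardy--Littlewood maximal operator. Such a dimensional $c_d$ exists (e.g. $c_d=(2C_d)^2$, $C_d$ from the $L^2$ bound of $M$; $c_d=e$ in the dyadic case). *)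

theory Defs
  imports "HOL-Analysis.Analysis"
begin

definition cube :: "'a::euclidean_space \<Rightarrow> real \<Rightarrow> 'a set" where
  "cube x r = cbox x (x + r *\<^sub>R One)"

definition cubes :: "'a::euclidean_space set set" where
  "cubes = {cube x r | x r. r > 0}"

definition epowr :: "ennreal \<Rightarrow> real \<Rightarrow> ennreal" where
  "epowr a p = (if a = \<infinity> then \<infinity> else ennreal (enn2real a powr p))"

definition Lp_norm :: "('a::euclidean_space \<Rightarrow> ennreal) \<Rightarrow> real \<Rightarrow> ennreal" where
  "Lp_norm g p = epowr (\<integral>\<^sup>+ x. epowr (g x) p \<partial>lborel) (1 / p)"

definition avg :: "('a::euclidean_space \<Rightarrow> ennreal) \<Rightarrow> 'a set \<Rightarrow> ennreal" where
  "avg g Q = (\<integral>\<^sup>+ x\<in>Q. g x \<partial>lborel) / emeasure lborel Q"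

text \<open>exp of the average of log g over Q, for g with values in [0,\<infinity>] (log 0 = -\<infinity>, log \<infinity> = \<infinity>).
  The integral of log g is the integral of its positive part minus that of its negative part.\<close>
definition log_pos :: "ennreal \<Rightarrow> ennreal" where
  "log_pos a = (if a = \<infinity> then \<infinity> else if a = 0 then 0 else ennreal (max 0 (ln (enn2real a))))"

definition log_neg :: "ennreal \<Rightarrow> ennreal" where
  "log_neg a = (if a = 0 then \<infinity> else if a = \<infinity> then 0 else ennreal (max 0 (- ln (enn2real a))))"

definition exp_avg_log :: "('a::euclidean_space \<Rightarrow> ennreal) \<Rightarrow> 'a set \<Rightarrow> ennreal" where
  "exp_avg_log g Q =
     (let P = \<integral>\<^sup>+ x\<in>Q. log_pos (g x) \<partial>lborel;
          N = \<integral>\<^sup>+ x\<in>Q. log_neg (g x) \<partial>lborel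
      in if P = \<infinity> then \<infinity> else if N = \<infinity> then 0
         else ennreal (exp ((enn2real P - enn2real N) / measure lborel Q)))"

definition maximal :: "('a::euclidean_space \<Rightarrow> real) \<Rightarrow> 'a \<Rightarrow> ennreal" where
  "maximal f x = (SUP Q\<in>{Q\<in>cubes. x \<in> Q}. avg (\<lambda>y. ennreal \<bar>f y\<bar>) Q)"

definition log_maximal :: "('a::euclidean_space \<Rightarrow> real) \<Rightarrow> 'a \<Rightarrow> ennreal" where
  "log_maximal f x = (SUP Q\<in>{Q\<in>cubes. x \<in> Q}. exp_avg_log (\<lambda>y. ennreal \<bar>f y\<bar>) Q)"

definition weight :: "('a::euclidean_space \<Rightarrow> real) \<Rightarrow> bool" where
  "weight w \<longleftrightarrow> w \<in> borel_measurable lborel \<and> (\<forall>x. 0 \<le> w x) \<and>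
     (AE x in lborel. 0 < w x) \<and> (\<forall>K. compact K \<longrightarrow> (\<integral>\<^sup>+ x\<in>K. ennreal (w x) \<partial>lborel) < \<infinity>)"

definition A_infty :: "('a::euclidean_space \<Rightarrow> real) \<Rightarrow> ennreal" where
  "A_infty w = (SUP Q\<in>cubes. avg (\<lambda>x. ennreal (w x)) Q * exp_avg_log (\<lambda>x. inverse (ennreal (w x))) Q)"

definition A_infty' :: "('a::euclidean_space \<Rightarrow> real) \<Rightarrow> ennreal" where
  "A_infty' w = (SUP Q\<in>cubes. (\<integral>\<^sup>+ x\<in>Q. maximal (\<lambda>y. w y * indicator Q y) x \<partial>lborel)
                               / (\<integral>\<^sup>+ x\<in>Q. ennreal (w x) \<partial>lborel))"

end

theory Submission
  imports Defs
begin



lemma nn_integral_cmult_le: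
  fixes c :: ennreal
  assumes "0 < c" "c < \<infinity>"
  shows "(\<integral>\<^sup>+ x. c * g x \<partial>M) \<le> c * integral\<^sup>N M g"
  unfolding nn_integral_def[of M "\<lambda>x. c * g x"]
proof (rule SUP_least, clarify)
  fix s assume s: "simple_function M s" "s \<le> (\<lambda>x. c * g x)"
  define s' where "s' = (\<lambda>x. s x / c)"
  have ss: "simple_function M s'" unfolding s'_def using simple_function_compose1[OF s(1)] .
  have le: "s' \<le> g"
  proof (rule le_funI)
    fix x have "s x \<le> c * g x" using s(2) by (auto dest: le_funD)
    then show "s' x \<le> g x" unfolding s'_def using assms
      by (metis divide_le_posI_ennreal)
  qed
  have eq: "s = (\<lambda>x. c * s' x)" unfolding s'_def using assms
    by (auto simp: ennreal_times_divide mult.commute[of c] mult_divide_eq_ennreal)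
  have "integral\<^sup>S M s = c * integral\<^sup>S M s'" by (subst eq) (simp add: ss)
  also have "\<dots> \<le> c * integral\<^sup>N M g"
    using ss le by (intro mult_left_mono) (auto simp: nn_integral_def intro!: SUP_upper)
  finally show "integral\<^sup>S M s \<le> c * integral\<^sup>N M g" .
qed

lemma epowr_one: "epowr a 1 = a"
  by (cases "a = \<infinity>") (auto simp: epowr_def ennreal_enn2real less_top)

lemma Lp_norm_one: "Lp_norm g 1 = (\<integral>\<^sup>+ x. g x \<partial>lborel)"
  by (simp add: Lp_norm_def epowr_one)

lemma cube_mem: "y \<in> cube x r \<longleftrightarrow> (\<forall>i\<in>Basis. x \<bullet> i \<le> y \<bullet> i \<and> y \<bullet> i \<le> x \<bullet> i + r)"
  by (simp add: cube_def mem_box inner_simps)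

lemma cube_measure: "0 < r \<Longrightarrow> emeasure lborel (cube x r) = ennreal (r ^ DIM('a))"
  for x :: "'a::euclidean_space"
  by (simp add: cube_def emeasure_lborel_cbox_eq inner_simps)

lemma sub_cube:
  fixes a b x :: "'a::euclidean_space"
  assumes "0 < s" "0 < t" "x \<in> cube a s" "x \<in> cube b t"
  shows "\<exists>y. cube a s \<inter> cube b t \<subseteq> cube y (min s t) \<and> cube y (min s t) \<subseteq> cube b t"
proof -
  define m where "m = min s t"
  define y where "y = (\<Sum>i\<in>Basis. min (max (a\<bullet>i) (b\<bullet>i)) (b\<bullet>i + t - m) *\<^sub>R i)"
  have yi: "y \<bullet> i = min (max (a\<bullet>i) (b\<bullet>i)) (b\<bullet>i + t - m)" if "i \<in> Basis" for i
    unfolding y_def using that by (simp add: inner_sum_left inner_Basis if_distrib cong: if_cong)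
  have "cube a s \<inter> cube b t \<subseteq> cube y m"
  proof (clarsimp simp: cube_mem yi)
    fix z :: 'a and i :: 'a assume z: "\<forall>i\<in>Basis. a \<bullet> i \<le> z \<bullet> i \<and> z \<bullet> i \<le> a \<bullet> i + s"
      "\<forall>i\<in>Basis. b \<bullet> i \<le> z \<bullet> i \<and> z \<bullet> i \<le> b \<bullet> i + t" and i: "i \<in> Basis"
    then have "a \<bullet> i \<le> z \<bullet> i" "z \<bullet> i \<le> a \<bullet> i + s" "b \<bullet> i \<le> z \<bullet> i" "z \<bullet> i \<le> b \<bullet> i + t" by auto
    then show "min (max (a \<bullet> i) (b \<bullet> i)) (b \<bullet> i + t - m) \<le> z \<bullet> i \<and>
          z \<bullet> i \<le> min (max (a \<bullet> i) (b \<bullet> i)) (b \<bullet> i + t - m) + m"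
      unfolding m_def by (simp add: min_def max_def)
  qed
  moreover have "cube y m \<subseteq> cube b t"
  proof (clarsimp simp: cube_mem yi)
    fix z i :: 'a assume z: "\<forall>i\<in>Basis. min (max (a \<bullet> i) (b \<bullet> i)) (b \<bullet> i + t - m) \<le> z \<bullet> i \<and>
          z \<bullet> i \<le> min (max (a \<bullet> i) (b \<bullet> i)) (b \<bullet> i + t - m) + m" and i: "i \<in> Basis"
    then have "min (max (a \<bullet> i) (b \<bullet> i)) (b \<bullet> i + t - m) \<le> z \<bullet> i"
       "z \<bullet> i \<le> min (max (a \<bullet> i) (b \<bullet> i)) (b \<bullet> i + t - m) + m" by auto
    then show "b \<bullet> i \<le> z \<bullet> i \<and> z \<bullet> i \<le> b \<bullet> i + t"
      unfolding m_def using assms(1,2) by (simp add: min_def max_def split: if_splits)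
  qed
  ultimately show ?thesis unfolding m_def by blast
qed




lemma log_pos_inv: "0 \<le> a \<Longrightarrow> log_pos (inverse (ennreal a)) = log_neg (ennreal a)"
  by (cases "a = 0") (auto simp: log_pos_def log_neg_def inverse_ennreal ln_inverse)

lemma log_neg_inv: "0 \<le> a \<Longrightarrow> log_neg (inverse (ennreal a)) = log_pos (ennreal a)"
  by (cases "a = 0") (auto simp: log_pos_def log_neg_def inverse_ennreal ln_inverse)

lemma log_pos_le: "0 \<le> a \<Longrightarrow> log_pos (ennreal a) \<le> ennreal a"
proof -
  assume a: "0 \<le> a"
  show ?thesis
  proof (cases "a = 0")
    case False
    then have "ln a \<le> a - 1" using a by (intro ln_le_minus_one) auto
    then show ?thesis using a False by (auto simp: log_pos_def intro!: ennreal_leI)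
  qed (simp add: log_pos_def)
qed

lemma weight_meas: "weight w \<Longrightarrow> (\<lambda>x. ennreal (w x)) \<in> borel_measurable lborel"
  unfolding weight_def by auto

lemma cubes_cube: "R \<in> cubes \<Longrightarrow> \<exists>y m. R = cube y m \<and> 0 < m"
  by (auto simp: cubes_def)

lemma cube_sets[measurable]: "cube y m \<in> sets lborel"
  by (simp add: cube_def)

lemma weight_int_pos:
  assumes w: "weight w" and m: "0 < m"
  shows "0 < (\<integral>\<^sup>+ x\<in>cube y m. ennreal (w x) \<partial>lborel)"
proof (rule ccontr)
  assume "\<not> ?thesis"
  then have z: "(\<integral>\<^sup>+ x. ennreal (w x) * indicator (cube y m) x \<partial>lborel) = 0" by simp
  have "AE x in lborel. ennreal (w x) * indicator (cube y m) x = 0"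
    using z weight_meas[OF w] by (subst (asm) nn_integral_0_iff_AE) auto
  moreover have "AE x in lborel. 0 < w x" using w by (simp add: weight_def)
  ultimately have "AE x in lborel. x \<notin> cube y m"
    by eventually_elim (auto split: split_indicator)
  then have "emeasure lborel (cube y m) = 0"
    by (subst (asm) AE_iff_measurable[OF cube_sets]) auto
  then show False using cube_measure[OF m, of y] m by simp
qed

lemma weight_int_fin:
  assumes w: "weight w"
  shows "(\<integral>\<^sup>+ x\<in>cube y m. ennreal (w x) \<partial>lborel) < \<infinity>"
  using w unfolding weight_def cube_def by (auto intro: compact_cbox)




lemma key_cube:
  fixes w :: "'a::euclidean_space \<Rightarrow> real"
  assumes w: "weight w" and m: "0 < m" and A: "A_infty w < \<infinity>"
  shows "avg (\<lambda>x. ennreal (w x)) (cube y m) \<le> A_infty w * exp_avg_log (\<lambda>x. ennreal (w x)) (cube y m)"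
proof -
  let ?R = "cube y m"
  have w0: "\<And>x. 0 \<le> w x" using w by (simp add: weight_def)
  define W where "W = (\<integral>\<^sup>+ x\<in>?R. ennreal (w x) \<partial>lborel)"
  define P where "P = (\<integral>\<^sup>+ x\<in>?R. log_pos (ennreal (w x)) \<partial>lborel)"
  define N where "N = (\<integral>\<^sup>+ x\<in>?R. log_neg (ennreal (w x)) \<partial>lborel)"
  have W0: "0 < W" unfolding W_def by (rule weight_int_pos[OF w m])
  have Wf: "W < \<infinity>" unfolding W_def by (rule weight_int_fin[OF w])
  have "P \<le> W" unfolding P_def W_def
    by (intro nn_integral_mono) (auto simp: w0 log_pos_le mult_right_mono split: split_indicator)
  with Wf have Pf: "P \<noteq> \<infinity>" by (auto simp: top_unique)
  have P': "(\<integral>\<^sup>+ x\<in>?R. log_pos (inverse (ennreal (w x))) \<partial>lborel) = N"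
    unfolding N_def by (simp add: log_pos_inv w0)
  have N': "(\<integral>\<^sup>+ x\<in>?R. log_neg (inverse (ennreal (w x))) \<partial>lborel) = P"
    unfolding P_def by (simp add: log_neg_inv w0)
  have Rc: "?R \<in> cubes" using m by (auto simp: cubes_def)
  have le: "avg (\<lambda>x. ennreal (w x)) ?R * exp_avg_log (\<lambda>x. inverse (ennreal (w x))) ?R \<le> A_infty w"
    unfolding A_infty_def using Rc by (rule SUP_upper)
  have mR: "emeasure lborel ?R = ennreal (m ^ DIM('a))" by (rule cube_measure[OF m])
  have avg_eq: "avg (\<lambda>x. ennreal (w x)) ?R = W / ennreal (m ^ DIM('a))"
    unfolding avg_def W_def mR ..
  have avgpos: "0 < avg (\<lambda>x. ennreal (w x)) ?R"
    unfolding avg_eq using W0 by (simp add: ennreal_zero_less_divide)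
  show ?thesis
  proof (cases "N = \<infinity>")
    case True
    then have "exp_avg_log (\<lambda>x. inverse (ennreal (w x))) ?R = \<infinity>"
      unfolding exp_avg_log_def Let_def P' by simp
    with le avgpos have "A_infty w = \<infinity>" by (simp add: ennreal_mult_top top_unique split: if_splits)
    with A show ?thesis by simp
  next
    case False
    define V where "V = measure lborel ?R"
    define p where "p = enn2real P"
    define n where "n = enn2real N"
    have e1: "exp_avg_log (\<lambda>x. ennreal (w x)) ?R = ennreal (exp ((p - n) / V))"
      unfolding exp_avg_log_def Let_def P_def[symmetric] N_def[symmetric] p_def n_def V_def
      using Pf False by simp
    have e2: "exp_avg_log (\<lambda>x. inverse (ennreal (w x))) ?R = ennreal (exp ((n - p) / V))"
      unfolding exp_avg_log_def Let_def P' N' p_def n_def V_def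
      using Pf False by simp
    have one: "ennreal (exp ((n - p) / V)) * ennreal (exp ((p - n) / V)) = 1"
      by (simp add: ennreal_mult'[symmetric] exp_add[symmetric] diff_divide_distrib)
    have "avg (\<lambda>x. ennreal (w x)) ?R =
        (avg (\<lambda>x. ennreal (w x)) ?R * ennreal (exp ((n - p) / V))) * ennreal (exp ((p - n) / V))"
      by (simp add: mult.assoc one)
    also have "\<dots> \<le> A_infty w * ennreal (exp ((p - n) / V))"
      using le e2 by (intro mult_right_mono) auto
    finally show ?thesis using e1 by simp
  qed
qed




lemma exp_avg_log_cong:
  assumes "\<And>y. y \<in> R \<Longrightarrow> g y = h y"
  shows "exp_avg_log g R = exp_avg_log h R"
proof -
  have "\<And>F. (\<integral>\<^sup>+ y\<in>R. F (g y) \<partial>lborel) = (\<integral>\<^sup>+ y\<in>R. F (h y) \<partial>lborel)"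
    by (intro nn_integral_cong) (auto split: split_indicator simp: assms)
  then show ?thesis unfolding exp_avg_log_def by simp
qed

lemma pointwise:
  fixes w :: "'a::euclidean_space \<Rightarrow> real"
  assumes w: "weight w" and A: "A_infty w < \<infinity>" and t: "0 < t" and x: "x \<in> cube b t"
  shows "maximal (\<lambda>y. w y * indicator (cube b t) y) x
     \<le> A_infty w * log_maximal (\<lambda>y. w y * indicator (cube b t) y) x"
  unfolding maximal_def
proof (rule SUP_least, clarify)
  let ?Q = "cube b t"
  let ?f = "\<lambda>y. w y * indicator (cube b t) y"
  have w0: "\<And>x. 0 \<le> w x" using w by (simp add: weight_def)
  fix R assume R: "R \<in> cubes" "x \<in> R"
  then obtain a s where Rd: "R = cube a s" "0 < s" by (auto simp: cubes_def)
  obtain y0 where y0: "cube a s \<inter> ?Q \<subseteq> cube y0 (min s t)" "cube y0 (min s t) \<subseteq> ?Q"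
    using sub_cube[OF Rd(2) t, of x a b] R x Rd by auto
  let ?R' = "cube y0 (min s t)"
  have m': "0 < min s t" using Rd t by simp
  define I where "I = (\<integral>\<^sup>+ z\<in>?R'. ennreal (w z) \<partial>lborel)"
  have I1: "(\<integral>\<^sup>+ z\<in>R. ennreal \<bar>?f z\<bar> \<partial>lborel) \<le> I"
    unfolding I_def Rd(1)
    by (intro nn_integral_mono) (use y0 in \<open>auto simp: w0 split: split_indicator\<close>)
  have mR: "emeasure lborel R = ennreal (s ^ DIM('a))" unfolding Rd(1) by (rule cube_measure[OF Rd(2)])
  have mR': "emeasure lborel ?R' = ennreal (min s t ^ DIM('a))" by (rule cube_measure[OF m'])
  have mle: "emeasure lborel ?R' \<le> emeasure lborel R"
    unfolding mR mR' using m' by (intro ennreal_leI power_mono) auto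
  have R'pos: "0 < emeasure lborel ?R'" "emeasure lborel ?R' \<noteq> \<infinity>" unfolding mR' using m' by auto
  have "avg (\<lambda>z. ennreal \<bar>?f z\<bar>) R \<le> I / emeasure lborel R"
    unfolding avg_def using I1 by (rule divide_right_mono_ennreal)
  also have "\<dots> \<le> I / emeasure lborel ?R'"
  proof (rule divide_le_posI_ennreal)
    show "0 < emeasure lborel R" using mR Rd by simp
    have "I = emeasure lborel ?R' * (I / emeasure lborel ?R')"
      using R'pos by (simp add: ennreal_times_divide mult.commute[of "emeasure lborel ?R'"] mult_divide_eq_ennreal)
    also have "\<dots> \<le> emeasure lborel R * (I / emeasure lborel ?R')"
      using mle by (rule mult_right_mono) simp
    finally show "I \<le> emeasure lborel R * (I / emeasure lborel ?R')" .
  qed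
  also have "\<dots> = avg (\<lambda>z. ennreal (w z)) ?R'" unfolding avg_def I_def ..
  also have "\<dots> \<le> A_infty w * exp_avg_log (\<lambda>z. ennreal (w z)) ?R'"
    by (rule key_cube[OF w m' A])
  also have "exp_avg_log (\<lambda>z. ennreal (w z)) ?R' = exp_avg_log (\<lambda>z. ennreal \<bar>?f z\<bar>) ?R'"
    by (rule exp_avg_log_cong) (use y0 w0 in \<open>auto split: split_indicator\<close>)
  also have "\<dots> \<le> log_maximal ?f x"
    unfolding log_maximal_def
  proof (rule SUP_upper)
    have "x \<in> ?R'" using y0 R x Rd by auto
    moreover have "?R' \<in> cubes" using m' unfolding cubes_def by blast
    ultimately show "?R' \<in> {Q \<in> cubes. x \<in> Q}" by simp
  qed
  finally show "avg (\<lambda>z. ennreal \<bar>?f z\<bar>) R \<le> A_infty w * log_maximal ?f x"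
    by (simp add: mult_left_mono)
qed




theorem proposition2p2:
  fixes c :: real and w :: "'a::euclidean_space \<Rightarrow> real"
  assumes M0_bound: "\<And>(f :: 'a \<Rightarrow> real) p. f \<in> borel_measurable lborel \<Longrightarrow> 0 < p \<Longrightarrow>
      Lp_norm (log_maximal f) p \<le> epowr (ennreal c) (1 / p) * Lp_norm (\<lambda>x. ennreal \<bar>f x\<bar>) p"
    and "weight w"
  shows "A_infty' w \<le> ennreal c * A_infty w"
proof -
  note w = \<open>weight w\<close>
  have w0: "\<And>x. 0 \<le> w x" using w by (simp add: weight_def)
  have wm: "w \<in> borel_measurable lborel" using w by (simp add: weight_def)
  have M1: "\<And>f :: 'a \<Rightarrow> real. f \<in> borel_measurable lborel \<Longrightarrow>
      (\<integral>\<^sup>+ x. log_maximal f x \<partial>lborel) \<le> ennreal c * (\<integral>\<^sup>+ x. ennreal \<bar>f x\<bar> \<partial>lborel)"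
  proof -
    fix f :: "'a \<Rightarrow> real" assume "f \<in> borel_measurable lborel"
    from M0_bound[OF this, of 1] show "(\<integral>\<^sup>+ x. log_maximal f x \<partial>lborel) \<le> ennreal c * (\<integral>\<^sup>+ x. ennreal \<bar>f x\<bar> \<partial>lborel)"
      by (simp add: Lp_norm_one epowr_one)
  qed
  have cpos: "0 < c"
  proof (rule ccontr)
    assume "\<not> 0 < c"
    then have c0: "ennreal c = 0" by (simp add: ennreal_eq_0_iff)
    let ?Q = "cube (0::'a) 1"
    let ?g = "\<lambda>y::'a. indicator ?Q y :: real"
    have gm: "?g \<in> borel_measurable lborel" by measurable
    have one: "exp_avg_log (\<lambda>y. ennreal \<bar>?g y\<bar>) ?Q = 1"
    proof -
      have "exp_avg_log (\<lambda>y. ennreal \<bar>?g y\<bar>) ?Q = exp_avg_log (\<lambda>y. 1) ?Q"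
        by (rule exp_avg_log_cong) auto
      also have "\<dots> = 1" by (simp add: exp_avg_log_def log_pos_def log_neg_def)
      finally show ?thesis .
    qed
    have Qc: "?Q \<in> cubes" unfolding cubes_def by force
    have "\<And>x. indicator ?Q x \<le> log_maximal ?g x"
    proof -
      fix x show "indicator ?Q x \<le> log_maximal ?g x"
      proof (cases "x \<in> ?Q")
        case True
        then have "exp_avg_log (\<lambda>y. ennreal \<bar>?g y\<bar>) ?Q \<le> log_maximal ?g x"
          unfolding log_maximal_def using Qc by (intro SUP_upper) auto
        then show ?thesis using True one by simp
      qed simp
    qed
    then have "(\<integral>\<^sup>+ x. indicator ?Q x \<partial>lborel) \<le> (\<integral>\<^sup>+ x. log_maximal ?g x \<partial>lborel)"
      by (intro nn_integral_mono) auto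
    also have "\<dots> \<le> 0" using M1[OF gm] c0 by simp
    finally have "emeasure lborel ?Q = 0" by (subst (asm) nn_integral_indicator[OF cube_sets]) simp
    then show False using cube_measure[of 1 "0::'a"] by simp
  qed
  show ?thesis
  proof (cases "A_infty w = \<infinity>")
    case True
    then show ?thesis using cpos by (simp add: ennreal_mult_top)
  next
    case False
    then have A: "A_infty w < \<infinity>" by (simp add: less_top)
    show ?thesis
      unfolding A_infty'_def
    proof (rule SUP_least)
      fix Q :: "'a set" assume "Q \<in> cubes"
      then obtain b t where Qd: "Q = cube b t" "0 < t" by (auto simp: cubes_def)
      let ?f = "\<lambda>y. w y * indicator Q y"
      have fm: "?f \<in> borel_measurable lborel" using wm unfolding Qd(1) by measurable
      define Wq where "Wq = (\<integral>\<^sup>+ x\<in>Q. ennreal (w x) \<partial>lborel)"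
      have W0: "0 < Wq" unfolding Wq_def Qd by (rule weight_int_pos[OF w Qd(2)])
      have fint: "(\<integral>\<^sup>+ x. ennreal \<bar>?f x\<bar> \<partial>lborel) = Wq"
        unfolding Wq_def by (intro nn_integral_cong) (auto simp: w0 split: split_indicator)
      have "(\<integral>\<^sup>+ x\<in>Q. maximal ?f x \<partial>lborel) \<le> (\<integral>\<^sup>+ x. A_infty w * log_maximal ?f x \<partial>lborel)"
      proof (intro nn_integral_mono)
        fix x show "maximal ?f x * indicator Q x \<le> A_infty w * log_maximal ?f x"
          using pointwise[OF w A Qd(2), of x] Qd by (auto split: split_indicator)
      qed
      also have "\<dots> \<le> A_infty w * (\<integral>\<^sup>+ x. log_maximal ?f x \<partial>lborel)"
      proof (cases "A_infty w = 0")
        case True then show ?thesis by simp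
      next
        case False then show ?thesis using A by (intro nn_integral_cmult_le) (auto simp: zero_less_iff_neq_zero)
      qed
      also have "\<dots> \<le> A_infty w * (ennreal c * Wq)"
        using M1[OF fm] fint by (intro mult_left_mono) auto
      also have "\<dots> = Wq * (ennreal c * A_infty w)" by (simp add: ac_simps)
      finally show "(\<integral>\<^sup>+ x\<in>Q. maximal ?f x \<partial>lborel) / (\<integral>\<^sup>+ x\<in>Q. ennreal (w x) \<partial>lborel)
          \<le> ennreal c * A_infty w"
        unfolding Wq_def[symmetric] using W0 by (intro divide_le_posI_ennreal)
    qed
  qed
qed


end
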